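(* Every permutation class containing only finitely many simple permutations is partially well-ordered under the pattern containment order, i.e. it contains no infinite antichain.
   Context: A permutation $\pi$ contains $\sigma$ ($\sigma\le\pi$) if some subsequence of $\pi$ has the same relative order as $\sigma$; this is a partial order on all finite permutations. A permutation class is a downset under $\le$. An antichain is a set of pairwise incomparable permutations. An interval of a permutation is a set of contiguous positions whose values form a contiguous set; a permutation of length $n$ is simple if its only intervals have sizes $0,1,n$. *)

theory Defs
  imports Main
begin

text \<open>A permutation of length n is represented as a list of the numbers 0,...,n-1
  (0-based one-line notation), each occurring exactly once.\<close>
definition is_perm :: "nat list \<Rightarrow> bool" where
  "is_perm p \<longleftrightarrow> set p = {0..<length p} \<and> distinct p"

definition contains :: "nat list \<Rightarrow> nat list \<Rightarrow> bool" where
  "contains \<sigma> \<pi> \<longleftrightarrow>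
     (\<exists>f. strict_mono_on {0..<length \<sigma>} f \<and> (\<forall>i<length \<sigma>. f i < length \<pi>) \<and>
          (\<forall>i<length \<sigma>. \<forall>j<length \<sigma>. (\<pi> ! f i < \<pi> ! f j) \<longleftrightarrow> (\<sigma> ! i < \<sigma> ! j)))"

definition perm_class :: "nat list set \<Rightarrow> bool" where
  "perm_class C \<longleftrightarrow> (\<forall>p\<in>C. is_perm p) \<and>
     (\<forall>\<pi>\<in>C. \<forall>\<sigma>. is_perm \<sigma> \<and> contains \<sigma> \<pi> \<longrightarrow> \<sigma> \<in> C)"

definition is_interval :: "nat list \<Rightarrow> nat set \<Rightarrow> bool" where
  "is_interval p I \<longleftrightarrow> (\<exists>i j. i \<le> j \<and> j \<le> length p \<and> I = {i..<j} \<and>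
      (\<exists>a. (\<lambda>k. p ! k) ` I = {a..<a + (j - i)}))"

definition simple_perm :: "nat list \<Rightarrow> bool" where
  "simple_perm p \<longleftrightarrow> is_perm p \<and>
     (\<forall>I. is_interval p I \<longrightarrow> card I \<in> {0, 1, length p})"

definition antichain :: "nat list set \<Rightarrow> bool" where
  "antichain A \<longleftrightarrow> (\<forall>p\<in>A. \<forall>q\<in>A. p \<noteq> q \<longrightarrow> \<not> contains p q)"

end

theory Submission
  imports Defs "HOL-Library.Infinite_Set"
begin


lemma contains_refl: "contains a a"
  unfolding contains_def by (rule exI[of _ id]) (auto intro: strict_mono_onI)

lemma contains_trans:
  assumes "contains a b" "contains b c" shows "contains a c"
proof -
  obtain f where f: "strict_mono_on {0..<length a} f" "\<forall>i<length a. f i < length b"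
    "\<forall>i<length a. \<forall>j<length a. (b ! f i < b ! f j) \<longleftrightarrow> (a ! i < a ! j)"
    using assms(1) unfolding contains_def by blast
  obtain g where g: "strict_mono_on {0..<length b} g" "\<forall>i<length b. g i < length c"
    "\<forall>i<length b. \<forall>j<length b. (c ! g i < c ! g j) \<longleftrightarrow> (b ! i < b ! j)"
    using assms(2) unfolding contains_def by blast
  have "strict_mono_on {0..<length a} (g \<circ> f)"
  proof (rule strict_mono_onI)
    fix r s assume rs: "r \<in> {0..<length a}" "s \<in> {0..<length a}" "r < s"
    have "f r < f s" using strict_mono_onD[OF f(1) rs] .
    then show "(g \<circ> f) r < (g \<circ> f) s" using strict_mono_onD[OF g(1), of "f r" "f s"] f(2) rs by auto
  qed
  moreover have "\<forall>i<length a. (g \<circ> f) i < length c" using f g by auto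
  moreover have "\<forall>i<length a. \<forall>j<length a. (c ! (g \<circ> f) i < c ! (g \<circ> f) j) \<longleftrightarrow> (a ! i < a ! j)"
    using f g by auto
  ultimately show ?thesis unfolding contains_def by blast
qed

lemma contains_distinct:
  assumes "contains x c" "distinct c" shows "distinct x"
proof -
  obtain f where f: "strict_mono_on {0..<length x} f" "\<forall>i<length x. f i < length c"
    "\<forall>i<length x. \<forall>j<length x. (c ! f i < c ! f j) \<longleftrightarrow> (x ! i < x ! j)"
    using assms(1) unfolding contains_def by blast
  show ?thesis unfolding distinct_conv_nth
  proof (intro allI impI)
    fix i j assume ij: "i < length x" "j < length x" "i \<noteq> j"
    show "x ! i \<noteq> x ! j"
    proof
      assume e: "x ! i = x ! j"
      then have "\<not> c ! f i < c ! f j" "\<not> c ! f j < c ! f i" using f(3) ij by auto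
      then have "c ! f i = c ! f j" by simp
      then have "f i = f j" using assms(2) f(2) ij by (simp add: nth_eq_iff_index_eq)
      moreover have "f i \<noteq> f j"
      proof (cases "i < j")
        case True then show ?thesis using strict_mono_onD[OF f(1), of i j] ij by auto
      next
        case False then show ?thesis using strict_mono_onD[OF f(1), of j i] ij by auto
      qed
      ultimately show False by simp
    qed
  qed
qed

definition blk :: "nat list \<Rightarrow> nat \<Rightarrow> nat \<Rightarrow> bool" where
 "blk \<pi> s t \<longleftrightarrow> s < t \<and> t \<le> length \<pi> \<and> (\<forall>p<length \<pi>. (p < s \<or> t \<le> p) \<longrightarrow>
    ((\<forall>q. s \<le> q \<and> q < t \<longrightarrow> \<pi>!p < \<pi>!q) \<or> (\<forall>q. s \<le> q \<and> q < t \<longrightarrow> \<pi>!q < \<pi>!p)))"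

definition part :: "nat list \<Rightarrow> nat \<Rightarrow> (nat \<Rightarrow> nat) \<Rightarrow> bool" where
 "part \<pi> k b \<longleftrightarrow> strict_mono b \<and> b 0 = 0 \<and> b k = length \<pi> \<and> (\<forall>l<k. blk \<pi> (b l) (b (Suc l)))"

definition rk :: "nat list \<Rightarrow> nat \<Rightarrow> (nat \<Rightarrow> nat) \<Rightarrow> nat \<Rightarrow> nat" where
 "rk \<pi> k b l = card {l'. l' < k \<and> \<pi>!(b l') < \<pi>!(b l)}"

definition quot :: "nat list \<Rightarrow> nat \<Rightarrow> (nat \<Rightarrow> nat) \<Rightarrow> nat list" where
 "quot \<pi> k b = map (rk \<pi> k b) [0..<k]"

definition blockl :: "nat list \<Rightarrow> (nat \<Rightarrow> nat) \<Rightarrow> nat \<Rightarrow> nat list" where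
 "blockl \<pi> b l = map (\<lambda>p. \<pi>!p) [b l..<b (Suc l)]"

definition bidx :: "(nat \<Rightarrow> nat) \<Rightarrow> nat \<Rightarrow> nat" where
 "bidx b p = (LEAST l. p < b (Suc l))"

lemma bidx_unique:
  assumes "strict_mono b" "b l \<le> p" "p < b (Suc l)" shows "bidx b p = l"
  unfolding bidx_def
proof (rule Least_equality)
  show "p < b (Suc l)" by fact
  fix y assume "p < b (Suc y)"
  show "l \<le> y"
  proof (rule ccontr)
    assume "\<not> l \<le> y" then have "Suc y \<le> l" by simp
    then have "b (Suc y) \<le> b l" using assms(1) by (simp add: strict_mono_less_eq)
    then show False using assms \<open>p < b (Suc y)\<close> by simp
  qed
qed

lemma bidx_prop:
  assumes "strict_mono b" "b 0 = 0"
  shows "b (bidx b p) \<le> p \<and> p < b (Suc (bidx b p))"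
proof -
  have ex: "p < b (Suc p)" using strict_mono_imp_increasing[OF assms(1), of "Suc p"] by simp
  have 1: "p < b (Suc (bidx b p))" unfolding bidx_def by (rule LeastI[where P="\<lambda>l. p < b (Suc l)", OF ex])
  have 2: "b (bidx b p) \<le> p"
  proof (cases "bidx b p")
    case 0 then show ?thesis using assms by simp
  next
    case (Suc l0)
    have "\<not> p < b (Suc l0)" using not_less_Least[of l0 "\<lambda>l. p < b (Suc l)"] Suc
      unfolding bidx_def by simp
    then show ?thesis using Suc by simp
  qed
  show ?thesis using 1 2 by simp
qed

lemma bidx_lt:
  assumes "strict_mono b" "b 0 = 0" "p < b k" shows "bidx b p < k"
proof (rule ccontr)
  assume "\<not> bidx b p < k"
  then have "b k \<le> b (bidx b p)" using assms(1) by (simp add: strict_mono_less_eq)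
  then show False using bidx_prop[OF assms(1,2), of p] assms(3) by simp
qed



lemma part_le: "part \<pi> k b \<Longrightarrow> l \<le> k \<Longrightarrow> b l \<le> length \<pi>"
  unfolding part_def by (metis strict_mono_less_eq)

lemma F1:
  assumes P: "part \<pi> k b" and l: "l < k" "l' < k" "l \<noteq> l'"
    and p: "b l \<le> p" "p < b (Suc l)" and q: "b l' \<le> q" "q < b (Suc l')"
  shows "\<pi>!p < \<pi>!q \<longleftrightarrow> \<pi>!(b l) < \<pi>!(b l')"
proof -
  have sm: "strict_mono b" using P unfolding part_def by simp
  have bl: "blk \<pi> (b l) (b (Suc l))" "blk \<pi> (b l') (b (Suc l'))" using P l unfolding part_def by auto
  have lenS: "b (Suc l) \<le> length \<pi>" "b (Suc l') \<le> length \<pi>" using part_le[OF P] l by auto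
  have ltS: "b l < b (Suc l)" "b l' < b (Suc l')" using sm by (auto simp: strict_mono_less)
  have outp: "p < b l' \<or> b (Suc l') \<le> p"
  proof (cases "l < l'")
    case True then have "b (Suc l) \<le> b l'" using sm by (simp add: strict_mono_less_eq)
    then show ?thesis using p by simp
  next
    case False then have "l' < l" using l by simp
    then have "b (Suc l') \<le> b l" using sm by (simp add: strict_mono_less_eq)
    then show ?thesis using p by simp
  qed
  have outq: "b l' < b l \<or> b (Suc l) \<le> b l'"
  proof (cases "l < l'")
    case True then have "b (Suc l) \<le> b l'" using sm by (simp add: strict_mono_less_eq)
    then show ?thesis by simp
  next
    case False then have "l' < l" using l by simp
    then have "b l' < b l" using sm by (simp add: strict_mono_less)
    then show ?thesis by simp
  qed
  have A: "(\<forall>r. b l' \<le> r \<and> r < b (Suc l') \<longrightarrow> \<pi>!p < \<pi>!r) \<or> (\<forall>r. b l' \<le> r \<and> r < b (Suc l') \<longrightarrow> \<pi>!r < \<pi>!p)"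
    using bl(2) outp p lenS unfolding blk_def by (meson less_le_trans)
  have C: "(\<forall>r. b l \<le> r \<and> r < b (Suc l) \<longrightarrow> \<pi>!(b l') < \<pi>!r) \<or> (\<forall>r. b l \<le> r \<and> r < b (Suc l) \<longrightarrow> \<pi>!r < \<pi>!(b l'))"
    using bl(1) outq ltS lenS unfolding blk_def by (meson less_le_trans)
  from A C show ?thesis using p q ltS
    by (metis dual_order.refl order_less_asym)
qed

lemma rk_less:
  assumes "l < k" "l' < k"
  shows "rk \<pi> k b l < rk \<pi> k b l' \<longleftrightarrow> \<pi>!(b l) < \<pi>!(b l')"
proof
  assume h: "\<pi>!(b l) < \<pi>!(b l')"
  have "{l''. l'' < k \<and> \<pi>!(b l'') < \<pi>!(b l)} \<subset> {l''. l'' < k \<and> \<pi>!(b l'') < \<pi>!(b l')}"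
    using h assms by auto
  then show "rk \<pi> k b l < rk \<pi> k b l'" unfolding rk_def
    by (rule psubset_card_mono[rotated]) simp
next
  assume h: "rk \<pi> k b l < rk \<pi> k b l'"
  show "\<pi>!(b l) < \<pi>!(b l')"
  proof (rule ccontr)
    assume "\<not> \<pi>!(b l) < \<pi>!(b l')"
    then have "{l''. l'' < k \<and> \<pi>!(b l'') < \<pi>!(b l')} \<subseteq> {l''. l'' < k \<and> \<pi>!(b l'') < \<pi>!(b l)}"
      by auto
    then have "rk \<pi> k b l' \<le> rk \<pi> k b l" unfolding rk_def
      by (rule card_mono[rotated]) simp
    then show False using h by simp
  qed
qed

lemma quot_nth: "l < k \<Longrightarrow> quot \<pi> k b ! l = rk \<pi> k b l"
  unfolding quot_def by simp

lemma length_quot[simp]: "length (quot \<pi> k b) = k"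
  unfolding quot_def by simp

lemma F1q:
  assumes P: "part \<pi> k b" and l: "l < k" "l' < k" "l \<noteq> l'"
    and p: "b l \<le> p" "p < b (Suc l)" and q: "b l' \<le> q" "q < b (Suc l')"
  shows "\<pi>!p < \<pi>!q \<longleftrightarrow> quot \<pi> k b ! l < quot \<pi> k b ! l'"
  using F1[OF assms] rk_less[OF l(1,2)] quot_nth l by simp

lemma quot_perm:
  assumes P: "part \<pi> k b" and d: "distinct \<pi>"
  shows "is_perm (quot \<pi> k b)"
proof -
  have sm: "strict_mono b" using P unfolding part_def by simp
  have bl: "l < k \<Longrightarrow> b l < length \<pi>" for l
    using P unfolding part_def by (metis strict_mono_less)
  have ne: "l < k \<Longrightarrow> l' < k \<Longrightarrow> l \<noteq> l' \<Longrightarrow> \<pi>!(b l) \<noteq> \<pi>!(b l')" for l l'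
    using d bl sm by (simp add: nth_eq_iff_index_eq strict_mono_eq)
  have dist: "distinct (quot \<pi> k b)"
    unfolding distinct_conv_nth
  proof (intro allI impI)
    fix i j assume ij: "i < length (quot \<pi> k b)" "j < length (quot \<pi> k b)" "i \<noteq> j"
    then have "\<pi>!(b i) < \<pi>!(b j) \<or> \<pi>!(b j) < \<pi>!(b i)" using ne by (simp add: nat_neq_iff)
    then show "quot \<pi> k b ! i \<noteq> quot \<pi> k b ! j"
      using rk_less[of i k j \<pi> b] rk_less[of j k i \<pi> b] ij quot_nth by auto
  qed
  have sub: "set (quot \<pi> k b) \<subseteq> {0..<k}"
  proof
    fix x assume "x \<in> set (quot \<pi> k b)"
    then obtain l where l: "l < k" "x = rk \<pi> k b l" unfolding quot_def by auto
    have "{l''. l'' < k \<and> \<pi>!(b l'') < \<pi>!(b l)} \<subseteq> {..<k} - {l}" by auto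
    then have "x \<le> card ({..<k} - {l})" unfolding l rk_def by (rule card_mono[rotated]) simp
    then show "x \<in> {0..<k}" using l by auto
  qed
  have "card (set (quot \<pi> k b)) = k" using dist distinct_card by fastforce
  then have "set (quot \<pi> k b) = {0..<k}" using sub by (intro card_subset_eq) auto
  then show ?thesis unfolding is_perm_def using dist by simp
qed

lemma quot_contains:
  assumes P: "part \<pi> k b" shows "contains (quot \<pi> k b) \<pi>"
  unfolding contains_def
proof (intro exI conjI allI impI)
  have sm: "strict_mono b" using P unfolding part_def by simp
  show "strict_mono_on {0..<length (quot \<pi> k b)} b" using sm
    by (simp add: strict_mono_def strict_mono_on_def)
  fix i assume i: "i < length (quot \<pi> k b)"
  then show "b i < length \<pi>" using P unfolding part_def by (metis length_quot strict_mono_less)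
  fix j assume j: "j < length (quot \<pi> k b)"
  show "(\<pi> ! b i < \<pi> ! b j) \<longleftrightarrow> (quot \<pi> k b ! i < quot \<pi> k b ! j)"
    using rk_less[of i k j \<pi> b] i j quot_nth by simp
qed

lemma blockl_len: "length (blockl \<pi> b l) = b (Suc l) - b l"
  unfolding blockl_def by simp

lemma blockl_nth: "r < b (Suc l) - b l \<Longrightarrow> blockl \<pi> b l ! r = \<pi> ! (b l + r)"
  unfolding blockl_def by simp

lemma block_contains:
  assumes P: "part \<pi> k b" and l: "l < k" shows "contains (blockl \<pi> b l) \<pi>"
  unfolding contains_def
proof (intro exI conjI allI impI)
  show "strict_mono_on {0..<length (blockl \<pi> b l)} (\<lambda>r. b l + r)"
    by (rule strict_mono_onI) simp
  have "b (Suc l) \<le> length \<pi>" using part_le[OF P] l by simp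
  then show "b l + i < length \<pi>" if "i < length (blockl \<pi> b l)" for i
    using that by (simp add: blockl_len)
  show "(\<pi> ! (b l + i) < \<pi> ! (b l + j)) \<longleftrightarrow> (blockl \<pi> b l ! i < blockl \<pi> b l ! j)"
    if "i < length (blockl \<pi> b l)" "j < length (blockl \<pi> b l)" for i j
    using that by (simp add: blockl_len blockl_nth)
qed

lemma block_len:
  assumes P: "part \<pi> k b" and k: "2 \<le> k" and l: "l < k"
  shows "length (blockl \<pi> b l) < length \<pi>"
proof -
  have sm: "strict_mono b" and b0: "b 0 = 0" and bk: "b k = length \<pi>" using P unfolding part_def by auto
  show ?thesis
  proof (cases "Suc l < k")
    case True
    then have "b (Suc l) < b k" using sm by (simp add: strict_mono_less)
    then show ?thesis using bk by (simp add: blockl_len)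
  next
    case False
    then have "Suc l = k" "0 < l" using l k by auto
    then have "b 0 < b l" "b (Suc l) = b k" "b l < b (Suc l)" using sm by (auto simp: strict_mono_less)
    then show ?thesis using bk b0 by (simp add: blockl_len)
  qed
qed



lemma bidx_range:
  assumes sm: "strict_mono b" and b0: "b 0 = 0" and q: "b i \<le> q" "q < b j"
  shows "i \<le> bidx b q \<and> bidx b q < j"
proof -
  have pr: "b (bidx b q) \<le> q" "q < b (Suc (bidx b q))" using bidx_prop[OF sm b0] by auto
  have "i \<le> bidx b q"
  proof (rule ccontr)
    assume "\<not> i \<le> bidx b q" then have "Suc (bidx b q) \<le> i" by simp
    then have "b (Suc (bidx b q)) \<le> b i" using sm by (simp add: strict_mono_less_eq)
    then show False using pr q by simp
  qed
  moreover have "bidx b q < j"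
  proof (rule ccontr)
    assume "\<not> bidx b q < j" then have "j \<le> bidx b q" by simp
    then have "b j \<le> b (bidx b q)" using sm by (simp add: strict_mono_less_eq)
    then show False using pr q by simp
  qed
  ultimately show ?thesis by simp
qed

lemma glue:
  assumes P: "part \<pi> k b" and P': "part \<pi>' k b'" and Q: "quot \<pi> k b = quot \<pi>' k b'"
    and H: "\<forall>l<k. contains (blockl \<pi> b l) (blockl \<pi>' b' l)"
  shows "contains \<pi> \<pi>'"
proof -
  have sm: "strict_mono b" and b0: "b 0 = 0" and bk: "b k = length \<pi>" using P unfolding part_def by auto
  have sm': "strict_mono b'" and b0': "b' 0 = 0" and bk': "b' k = length \<pi>'" using P' unfolding part_def by auto
  have "\<forall>l. \<exists>g. l < k \<longrightarrow> strict_mono_on {0..<length (blockl \<pi> b l)} g \<and>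
     (\<forall>i<length (blockl \<pi> b l). g i < length (blockl \<pi>' b' l)) \<and>
     (\<forall>i<length (blockl \<pi> b l). \<forall>j<length (blockl \<pi> b l).
        (blockl \<pi>' b' l ! g i < blockl \<pi>' b' l ! g j) \<longleftrightarrow> (blockl \<pi> b l ! i < blockl \<pi> b l ! j))"
    using H unfolding contains_def by blast
  then obtain F where F: "\<And>l. l < k \<Longrightarrow> strict_mono_on {0..<length (blockl \<pi> b l)} (F l) \<and>
     (\<forall>i<length (blockl \<pi> b l). F l i < length (blockl \<pi>' b' l)) \<and>
     (\<forall>i<length (blockl \<pi> b l). \<forall>j<length (blockl \<pi> b l).
        (blockl \<pi>' b' l ! F l i < blockl \<pi>' b' l ! F l j) \<longleftrightarrow> (blockl \<pi> b l ! i < blockl \<pi> b l ! j))"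
    by metis
  define f where "f p = b' (bidx b p) + F (bidx b p) (p - b (bidx b p))" for p
  have K: "bidx b p < k \<and> b (bidx b p) \<le> p \<and> p < b (Suc (bidx b p)) \<and>
      b' (bidx b p) \<le> f p \<and> f p < b' (Suc (bidx b p)) \<and>
      \<pi>' ! f p = blockl \<pi>' b' (bidx b p) ! F (bidx b p) (p - b (bidx b p)) \<and>
      \<pi> ! p = blockl \<pi> b (bidx b p) ! (p - b (bidx b p))" if p: "p < length \<pi>" for p
  proof -
    let ?l = "bidx b p"
    have l: "?l < k" using bidx_lt[OF sm b0] p bk by simp
    have pr: "b ?l \<le> p" "p < b (Suc ?l)" using bidx_prop[OF sm b0] by auto
    have r: "p - b ?l < length (blockl \<pi> b ?l)" using pr by (simp add: blockl_len)
    have Fr: "F ?l (p - b ?l) < b' (Suc ?l) - b' ?l" using F[OF l] r by (simp add: blockl_len)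
    show ?thesis using l pr Fr r unfolding f_def by (simp add: blockl_nth blockl_len)
  qed
  show ?thesis unfolding contains_def
  proof (intro exI conjI allI impI)
    show "strict_mono_on {0..<length \<pi>} f"
    proof (rule strict_mono_onI)
      fix p q assume pq: "p \<in> {0..<length \<pi>}" "q \<in> {0..<length \<pi>}" "p < q"
      have Kp: "bidx b p < k" "b (bidx b p) \<le> p" "p < b (Suc (bidx b p))"
        "b' (bidx b p) \<le> f p" "f p < b' (Suc (bidx b p))" using K pq by auto
      have Kq: "bidx b q < k" "b (bidx b q) \<le> q" "q < b (Suc (bidx b q))"
        "b' (bidx b q) \<le> f q" "f q < b' (Suc (bidx b q))" using K pq by auto
      consider "bidx b p = bidx b q" | "bidx b p < bidx b q" | "bidx b q < bidx b p" by linarith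
      then show "f p < f q"
      proof cases
        case 1
        let ?l = "bidx b p"
        have "F ?l (p - b ?l) < F ?l (q - b ?l)"
          using strict_mono_onD[OF conjunct1[OF F[OF Kp(1)]], of "p - b ?l" "q - b ?l"] Kp Kq pq 1
          by (simp add: blockl_len)
        then show ?thesis unfolding f_def using 1 by simp
      next
        case 2
        then have "b' (Suc (bidx b p)) \<le> b' (bidx b q)" using sm' by (simp add: strict_mono_less_eq)
        then show ?thesis using Kp Kq by simp
      next
        case 3
        then have "b (Suc (bidx b q)) \<le> b (bidx b p)" using sm by (simp add: strict_mono_less_eq)
        then show ?thesis using Kp Kq pq by simp
      qed
    qed
  next
    fix p assume p: "p < length \<pi>"
    have "b' (Suc (bidx b p)) \<le> length \<pi>'" using part_le[OF P'] K[OF p] by simp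
    then show "f p < length \<pi>'" using K[OF p] by simp
  next
    fix p q assume p: "p < length \<pi>" and q: "q < length \<pi>"
    have Kp: "bidx b p < k" "b (bidx b p) \<le> p" "p < b (Suc (bidx b p))"
        "b' (bidx b p) \<le> f p" "f p < b' (Suc (bidx b p))" using K p by auto
    have Kq: "bidx b q < k" "b (bidx b q) \<le> q" "q < b (Suc (bidx b q))"
        "b' (bidx b q) \<le> f q" "f q < b' (Suc (bidx b q))" using K q by auto
    show "(\<pi>' ! f p < \<pi>' ! f q) \<longleftrightarrow> (\<pi> ! p < \<pi> ! q)"
    proof (cases "bidx b p = bidx b q")
      case True
      let ?l = "bidx b p"
      have "(blockl \<pi>' b' ?l ! F ?l (p - b ?l) < blockl \<pi>' b' ?l ! F ?l (q - b ?l)) \<longleftrightarrow>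
            (blockl \<pi> b ?l ! (p - b ?l) < blockl \<pi> b ?l ! (q - b ?l))"
        using F[OF Kp(1)] Kp Kq True by (simp add: blockl_len)
      then show ?thesis using K[OF p] K[OF q] True by simp
    next
      case False
      have "\<pi>!p < \<pi>!q \<longleftrightarrow> quot \<pi> k b ! bidx b p < quot \<pi> k b ! bidx b q"
        by (rule F1q[OF P Kp(1) Kq(1) False Kp(2,3) Kq(2,3)])
      moreover have "\<pi>'!f p < \<pi>'!f q \<longleftrightarrow> quot \<pi>' k b' ! bidx b p < quot \<pi>' k b' ! bidx b q"
        by (rule F1q[OF P' Kp(1) Kq(1) False Kp(4,5) Kq(4,5)])
      ultimately show ?thesis using Q by simp
    qed
  qed
qed



lemma merged_blk:
  assumes P: "part \<pi> k b" and d: "distinct \<pi>" and ij: "i < j" "j \<le> k"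
    and img: "(\<lambda>x. quot \<pi> k b ! x) ` {i..<j} = {a..<a + (j - i)}"
  shows "blk \<pi> (b i) (b j)"
proof -
  let ?s = "quot \<pi> k b"
  have sm: "strict_mono b" and b0: "b 0 = 0" and bk: "b k = length \<pi>" using P unfolding part_def by auto
  have dq: "distinct ?s" using quot_perm[OF P d] unfolding is_perm_def by simp
  have "b i < b j" using sm ij by (simp add: strict_mono_less)
  moreover have "b j \<le> length \<pi>" using part_le[OF P ij(2)] .
  moreover have "((\<forall>q. b i \<le> q \<and> q < b j \<longrightarrow> \<pi>!p < \<pi>!q) \<or> (\<forall>q. b i \<le> q \<and> q < b j \<longrightarrow> \<pi>!q < \<pi>!p))"
    if p: "p < length \<pi>" "p < b i \<or> b j \<le> p" for p
  proof -
    let ?l0 = "bidx b p"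
    have l0: "?l0 < k" using bidx_lt[OF sm b0] p bk by simp
    have pr: "b ?l0 \<le> p" "p < b (Suc ?l0)" using bidx_prop[OF sm b0] by auto
    have nI: "?l0 \<notin> {i..<j}"
    proof
      assume "?l0 \<in> {i..<j}"
      then have "b i \<le> b ?l0" "b (Suc ?l0) \<le> b j" using sm by (auto simp: strict_mono_less_eq)
      then show False using pr p by simp
    qed
    have "?s ! ?l0 \<notin> {a..<a + (j - i)}"
    proof
      assume "?s ! ?l0 \<in> {a..<a + (j - i)}"
      then have "?s ! ?l0 \<in> (\<lambda>x. ?s ! x) ` {i..<j}" using img by simp
      then obtain x where x: "x \<in> {i..<j}" "?s ! x = ?s ! ?l0" by (auto simp: image_iff)
      have "x < k" using x ij by simp
      then have "x = ?l0" using dq x(2) l0 by (simp add: nth_eq_iff_index_eq)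
      then show False using x nI by simp
    qed
    then have cs: "?s ! ?l0 < a \<or> a + (j - i) \<le> ?s ! ?l0" by auto
    have Q: "?l0 \<noteq> bidx b q \<and> bidx b q < k \<and> b (bidx b q) \<le> q \<and> q < b (Suc (bidx b q)) \<and>
       a \<le> ?s ! bidx b q \<and> ?s ! bidx b q < a + (j - i)" if q: "b i \<le> q" "q < b j" for q
    proof -
      have r: "i \<le> bidx b q \<and> bidx b q < j" using bidx_range[OF sm b0 q] .
      then have "bidx b q \<in> {i..<j}" by simp
      then have "?s ! bidx b q \<in> (\<lambda>x. ?s ! x) ` {i..<j}" by (rule imageI)
      then have m: "?s ! bidx b q \<in> {a..<a + (j - i)}" using img by simp
      have ne: "?l0 \<noteq> bidx b q" using r nI by auto
      have lt: "bidx b q < k" using r ij by simp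
      have bp: "b (bidx b q) \<le> q" "q < b (Suc (bidx b q))" using bidx_prop[OF sm b0, of q] by auto
      show ?thesis using m ne lt bp by simp
    qed
    from cs show ?thesis
    proof
      assume c: "?s ! ?l0 < a"
      have "\<pi>!p < \<pi>!q" if q: "b i \<le> q" "q < b j" for q
      proof -
        have Qq: "?l0 \<noteq> bidx b q" "bidx b q < k" "b (bidx b q) \<le> q" "q < b (Suc (bidx b q))"
          "a \<le> ?s ! bidx b q" using Q[OF q] by auto
        show ?thesis using F1q[OF P l0 Qq(2) Qq(1) pr Qq(3,4)] c Qq(5) by simp
      qed
      then show ?thesis by blast
    next
      assume c: "a + (j - i) \<le> ?s ! ?l0"
      have "\<pi>!q < \<pi>!p" if q: "b i \<le> q" "q < b j" for q
      proof -
        have Qq: "bidx b q \<noteq> ?l0" "bidx b q < k" "b (bidx b q) \<le> q" "q < b (Suc (bidx b q))"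
          "?s ! bidx b q < a + (j - i)" using Q[OF q] by auto
        show ?thesis using F1q[OF P Qq(2) l0 Qq(1) Qq(3,4) pr] c Qq(5) by simp
      qed
      then show ?thesis by blast
    qed
  qed
  ultimately show ?thesis unfolding blk_def by blast
qed

lemma simple_of_min:
  assumes P: "part \<pi> k b" and d: "distinct \<pi>" and k: "2 \<le> k"
    and m: "\<And>k' b'. part \<pi> k' b' \<Longrightarrow> 2 \<le> k' \<Longrightarrow> k \<le> k'"
  shows "simple_perm (quot \<pi> k b)"
  unfolding simple_perm_def
proof (intro conjI allI impI)
  show "is_perm (quot \<pi> k b)" by (rule quot_perm[OF P d])
  fix I assume "is_interval (quot \<pi> k b) I"
  then obtain i j a where ij: "i \<le> j" "j \<le> k" "I = {i..<j}"
    and img: "(\<lambda>x. quot \<pi> k b ! x) ` I = {a..<a + (j - i)}"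
    unfolding is_interval_def by auto
  show "card I \<in> {0, 1, length (quot \<pi> k b)}"
  proof (rule ccontr)
    assume "card I \<notin> {0, 1, length (quot \<pi> k b)}"
    then have c: "2 \<le> j - i" "j - i < k" using ij by auto
    have sm: "strict_mono b" and b0: "b 0 = 0" and bk: "b k = length \<pi>" using P unfolding part_def by auto
    define e where "e = j - i - 1"
    define b' where "b' l = (if l \<le> i then b l else b (l + e))" for l
    have e: "1 \<le> e" "i + e + 1 = j" using c ij unfolding e_def by auto
    have sm': "strict_mono b'"
    proof (rule strict_monoI)
      fix x y :: nat assume "x < y"
      then show "b' x < b' y" unfolding b'_def using sm by (auto simp: strict_mono_less)
    qed
    have "part \<pi> (k - e) b'"
      unfolding part_def
    proof (intro conjI allI impI)
      show "strict_mono b'" by fact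
      show "b' 0 = 0" using b0 unfolding b'_def by simp
      show "b' (k - e) = length \<pi>" using bk e ij unfolding b'_def by auto
      fix l assume l: "l < k - e"
      consider "l < i" | "l = i" | "i < l" by linarith
      then show "blk \<pi> (b' l) (b' (Suc l))"
      proof cases
        case 1
        have "blk \<pi> (b l) (b (Suc l))" using P l 1 ij unfolding part_def by simp
        then show ?thesis using 1 unfolding b'_def by simp
      next
        case 2
        have "blk \<pi> (b i) (b j)"
          by (rule merged_blk[OF P d _ ij(2)]) (use c img ij in auto)
        then show ?thesis using 2 e unfolding b'_def by simp
      next
        case 3
        have "l + e < k" using l 3 by simp
        then have "blk \<pi> (b (l + e)) (b (Suc (l + e)))" using P unfolding part_def by simp
        then show ?thesis using 3 unfolding b'_def by simp
      qed
    qed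
    moreover have "2 \<le> k - e" using c unfolding e_def by auto
    ultimately have "k \<le> k - e" by (rule m)
    then show False using e c by simp
  qed
qed

lemma decomp:
  assumes d: "distinct \<pi>" and n: "2 \<le> length \<pi>"
  shows "\<exists>k b. part \<pi> k b \<and> 2 \<le> k \<and> simple_perm (quot \<pi> k b)"
proof -
  have ex: "part \<pi> (length \<pi>) (\<lambda>l. l)"
    unfolding part_def blk_def
  proof (intro conjI allI impI)
    show "strict_mono (\<lambda>l::nat. l)" by (rule strict_monoI) simp
    fix l p assume l: "l < length \<pi>" and p: "p < length \<pi>" "p < l \<or> Suc l \<le> p"
    then have "\<pi>!p \<noteq> \<pi>!l" using d by (auto simp: nth_eq_iff_index_eq)
    then have "\<pi>!p < \<pi>!l \<or> \<pi>!l < \<pi>!p" by (simp add: nat_neq_iff)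
    moreover have qeq: "\<And>q. l \<le> q \<and> q < Suc l \<longleftrightarrow> q = l" by auto
    ultimately show "(\<forall>q. l \<le> q \<and> q < Suc l \<longrightarrow> \<pi> ! p < \<pi> ! q) \<or> (\<forall>q. l \<le> q \<and> q < Suc l \<longrightarrow> \<pi> ! q < \<pi> ! p)"
      by (simp only: qeq) blast
  qed auto
  define K where "K = (LEAST k. 2 \<le> k \<and> (\<exists>b. part \<pi> k b))"
  have KP: "2 \<le> K \<and> (\<exists>b. part \<pi> K b)" unfolding K_def
    by (rule LeastI[where P="\<lambda>k. 2 \<le> k \<and> (\<exists>b. part \<pi> k b)"]) (use ex n in blast)
  then obtain b where b: "part \<pi> K b" by blast
  have m: "K \<le> k'" if "part \<pi> k' b'" "2 \<le> k'" for k' b'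
    unfolding K_def by (rule Least_le) (use that in blast)
  have "simple_perm (quot \<pi> K b)"
    by (rule simple_of_min[OF b d]) (use KP m in auto)
  then show ?thesis using KP b by blast
qed



definition bad :: "nat list set \<Rightarrow> (nat \<Rightarrow> nat list) \<Rightarrow> bool" where
 "bad X g \<longleftrightarrow> (\<forall>n. g n \<in> X) \<and> (\<forall>i j. i < j \<longrightarrow> \<not> contains (g i) (g j))"

definition extb :: "nat list set \<Rightarrow> nat list list \<Rightarrow> (nat \<Rightarrow> nat list) \<Rightarrow> bool" where
 "extb X ps g \<longleftrightarrow> bad X g \<and> (\<forall>i<length ps. g i = ps ! i)"

definition nxt :: "nat list set \<Rightarrow> nat list list \<Rightarrow> nat list" where
 "nxt X ps = (SOME x. (\<exists>g. extb X ps g \<and> g (length ps) = x) \<and>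
     (\<forall>h. extb X ps h \<longrightarrow> length x \<le> length (h (length ps))))"

primrec pre :: "nat list set \<Rightarrow> nat \<Rightarrow> nat list list" where
 "pre X 0 = []" | "pre X (Suc n) = pre X n @ [nxt X (pre X n)]"

definition mb :: "nat list set \<Rightarrow> nat \<Rightarrow> nat list" where "mb X n = nxt X (pre X n)"

lemma nxt_prop:
  assumes "extb X ps g"
  shows "(\<exists>g. extb X ps g \<and> g (length ps) = nxt X ps) \<and>
         (\<forall>h. extb X ps h \<longrightarrow> length (nxt X ps) \<le> length (h (length ps)))"
proof -
  obtain g0 where g0: "extb X ps g0" "\<forall>h. extb X ps h \<longrightarrow> length (g0 (length ps)) \<le> length (h (length ps))"
    using ex_has_least_nat[of "extb X ps" g "\<lambda>g. length (g (length ps))"] assms by blast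
  show ?thesis unfolding nxt_def
    by (rule someI[where x="g0 (length ps)"]) (use g0 in blast)
qed

lemma length_pre[simp]: "length (pre X n) = n"
  by (induction n) auto

lemma pre_nth: "i < n \<Longrightarrow> pre X n ! i = mb X i"
proof (induction n)
  case 0 then show ?case by simp
next
  case (Suc n)
  show ?case
  proof (cases "i < n")
    case True then show ?thesis using Suc by (simp add: nth_append)
  next
    case False then have "i = n" using Suc by simp
    then show ?thesis by (simp add: nth_append mb_def)
  qed
qed

lemma pre_ext: assumes "bad X g0" shows "\<exists>g. extb X (pre X n) g"
proof (induction n)
  case 0 then show ?case using assms unfolding extb_def by auto
next
  case (Suc n)
  then obtain g where "extb X (pre X n) g" by blast
  from nxt_prop[OF this] obtain g' where g': "extb X (pre X n) g'" "g' n = nxt X (pre X n)" by auto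
  have "extb X (pre X (Suc n)) g'"
    using g' unfolding extb_def by (auto simp: nth_append less_Suc_eq)
  then show ?case by blast
qed

lemma mb_bad: assumes "bad X g0" shows "bad X (mb X)"
  unfolding bad_def
proof (intro conjI allI impI)
  fix n
  obtain g where "extb X (pre X n) g" using pre_ext[OF assms] by blast
  from nxt_prop[OF this] obtain g' where g': "extb X (pre X n) g'" "g' n = mb X n"
    by (auto simp: mb_def)
  then have "bad X g'" unfolding extb_def by simp
  then have "g' n \<in> X" unfolding bad_def by simp
  then show "mb X n \<in> X" using g'(2) by simp
next
  fix i j :: nat assume ij: "i < j"
  obtain g where "extb X (pre X j) g" using pre_ext[OF assms] by blast
  from nxt_prop[OF this] obtain g' where g': "extb X (pre X j) g'" "g' j = mb X j"
    by (auto simp: mb_def)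
  have "g' i = mb X i" using g'(1) ij pre_nth[OF ij] unfolding extb_def by simp
  moreover have "bad X g'" using g' unfolding extb_def by simp
  then have "\<not> contains (g' i) (g' j)" using ij unfolding bad_def by simp
  ultimately show "\<not> contains (mb X i) (mb X j)" using g'(2) by simp
qed

lemma mb_min:
  assumes "bad X g0" "bad X h" "\<forall>i<n. h i = mb X i"
  shows "length (mb X n) \<le> length (h n)"
proof -
  have "extb X (pre X n) h" using assms pre_nth unfolding extb_def by simp
  obtain g where "extb X (pre X n) g" using pre_ext[OF assms(1)] by blast
  from nxt_prop[OF this] \<open>extb X (pre X n) h\<close> show ?thesis by (auto simp: mb_def)
qed

lemma mono_sub:
  fixes y :: "nat \<Rightarrow> nat list"
  assumes W: "\<And>x :: nat \<Rightarrow> nat list. (\<forall>j. P (x j)) \<Longrightarrow> \<exists>i j. i < j \<and> contains (x i) (x j)"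
    and y: "\<forall>j. P (y j)"
  shows "\<exists>h::nat\<Rightarrow>nat. strict_mono h \<and> (\<forall>i j. i < j \<longrightarrow> contains (y (h i)) (y (h j)))"
proof -
  let ?T = "{i::nat. \<forall>j>i. \<not> contains (y i) (y j)}"
  have "finite ?T"
  proof (rule ccontr)
    assume inf: "infinite ?T"
    obtain r :: "nat \<Rightarrow> nat" where r: "strict_mono r" "\<And>n. r n \<in> ?T"
      using infinite_enumerate[OF inf] by blast
    have "\<forall>j. P (y (r j))" using y by simp
    from W[OF this] obtain i j where ij: "i < j" "contains (y (r i)) (y (r j))" by blast
    have T: "\<forall>j'>r i. \<not> contains (y (r i)) (y j')" using r(2)[of i] by simp
    have "r i < r j" using r(1) ij(1) by (simp add: strict_mono_less)
    then have "\<not> contains (y (r i)) (y (r j))" by (rule mp[OF spec[OF T, of "r j"]])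
    then show False using ij(2) by (rule notE)
  qed
  then obtain N where N: "\<forall>n\<in>?T. n < N" using finite_nat_set_iff_bounded by blast
  have "\<forall>i. \<exists>j. N \<le> i \<longrightarrow> i < j \<and> contains (y i) (y j)"
  proof (intro allI)
    fix i
    show "\<exists>j. N \<le> i \<longrightarrow> i < j \<and> contains (y i) (y j)"
    proof (cases "N \<le> i")
      case True
      then have "i \<notin> ?T" using N by (meson leD)
      then have "\<exists>j>i. contains (y i) (y j)" by simp
      then show ?thesis by blast
    qed simp
  qed
  then have "\<exists>nx. \<forall>i. N \<le> i \<longrightarrow> i < nx i \<and> contains (y i) (y (nx i))" by (rule choice)
  then obtain nx where nx0: "\<forall>i. N \<le> i \<longrightarrow> i < nx i \<and> contains (y i) (y (nx i))" by blast
  have nx: "\<And>i. N \<le> i \<Longrightarrow> i < nx i \<and> contains (y i) (y (nx i))" using nx0 by blast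
  define h where "h n = (nx ^^ n) N" for n
  have hN: "N \<le> h n" for n
  proof (induction n)
    case 0 then show ?case by (simp add: h_def)
  next
    case (Suc n)
    then have "h n < nx (h n)" using nx by blast
    then show ?case using Suc by (simp add: h_def)
  qed
  have hs: "h n < h (Suc n) \<and> contains (y (h n)) (y (h (Suc n)))" for n
    using nx[OF hN[of n]] by (simp add: h_def)
  have sm: "strict_mono h" unfolding strict_mono_Suc_iff using hs by blast
  have ch: "i < j \<longrightarrow> contains (y (h i)) (y (h j))" for i j
  proof (induction j)
    case 0 then show ?case by simp
  next
    case (Suc j)
    show ?case
    proof
      assume "i < Suc j"
      then consider "i < j" | "i = j" by linarith
      then show "contains (y (h i)) (y (h (Suc j)))"
      proof cases
        case 1
        then have "contains (y (h i)) (y (h j))" using Suc.IH by blast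
        moreover have "contains (y (h j)) (y (h (Suc j)))" using hs[of j] by simp
        ultimately show ?thesis by (rule contains_trans)
      next
        case 2 then show ?thesis using hs[of j] by simp
      qed
    qed
  qed
  have "strict_mono h \<and> (\<forall>i j. i < j \<longrightarrow> contains (y (h i)) (y (h j)))" using sm ch by simp
  then show ?thesis by (rule exI[where x=h])
qed

lemma tuple_sub:
  fixes y :: "nat \<Rightarrow> nat \<Rightarrow> nat list"
  assumes W: "\<And>x :: nat \<Rightarrow> nat list. (\<forall>j. P (x j)) \<Longrightarrow> \<exists>i j. i < j \<and> contains (x i) (x j)"
  shows "(\<forall>m l. l < k \<longrightarrow> P (y m l)) \<Longrightarrow>
    \<exists>h::nat\<Rightarrow>nat. strict_mono h \<and> (\<forall>i j l. i < j \<longrightarrow> l < k \<longrightarrow> contains (y (h i) l) (y (h j) l))"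
proof (induction k)
  case 0
  have "strict_mono (id :: nat \<Rightarrow> nat)" by (simp add: strict_mono_def)
  then show ?case by blast
next
  case (Suc k)
  have "\<forall>m l. l < k \<longrightarrow> P (y m l)" using Suc.prems by simp
  from Suc.IH[OF this] obtain h1 :: "nat \<Rightarrow> nat" where h1: "strict_mono h1" "\<forall>i j l. i < j \<longrightarrow> l < k \<longrightarrow> contains (y (h1 i) l) (y (h1 j) l)"
    by blast
  have "\<forall>j. P (y (h1 j) k)" using Suc.prems by simp
  from mono_sub[OF W this] obtain h2 :: "nat \<Rightarrow> nat" where h2: "strict_mono h2"
    "\<forall>i j. i < j \<longrightarrow> contains (y (h1 (h2 i)) k) (y (h1 (h2 j)) k)" by blast
  have "strict_mono (h1 \<circ> h2)" using h1(1) h2(1) unfolding strict_mono_def by simp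
  moreover have "\<forall>i j l. i < j \<longrightarrow> l < Suc k \<longrightarrow> contains (y ((h1 \<circ> h2) i) l) (y ((h1 \<circ> h2) j) l)"
  proof (intro allI impI)
    fix i j l :: nat assume ij: "i < j" and l: "l < Suc k"
    have "h2 i < h2 j" using h2(1) ij by (simp add: strict_mono_less)
    show "contains (y ((h1 \<circ> h2) i) l) (y ((h1 \<circ> h2) j) l)"
    proof (cases "l < k")
      case True
      then show ?thesis using h1(2) \<open>h2 i < h2 j\<close> by simp
    next
      case False
      then have "l = k" using l by simp
      then show ?thesis using h2(2) ij by simp
    qed
  qed
  ultimately show ?case by (intro exI[where x="h1 \<circ> h2"] conjI)
qed



lemma contains_nil: "length a = 0 \<Longrightarrow> contains a b"
  unfolding contains_def by (intro exI[of _ id]) (auto simp: strict_mono_on_def)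

lemma contains_one: "length a = 1 \<Longrightarrow> b \<noteq> [] \<Longrightarrow> contains a b"
  unfolding contains_def by (intro exI[of _ "\<lambda>_. 0"]) (auto simp: strict_mono_on_def)

theorem mainTheorem6:
  assumes "perm_class C"
    and "finite {p \<in> C. simple_perm p}"
  shows "\<not> (\<exists>A. A \<subseteq> C \<and> infinite A \<and> antichain A)"
proof
  assume "\<exists>A. A \<subseteq> C \<and> infinite A \<and> antichain A"
  then obtain A where A: "A \<subseteq> C" "infinite A" "antichain A" by blast
  have Cp: "\<And>p. p \<in> C \<Longrightarrow> is_perm p" and Cd: "\<And>\<pi> \<sigma>. \<pi> \<in> C \<Longrightarrow> is_perm \<sigma> \<Longrightarrow> contains \<sigma> \<pi> \<Longrightarrow> \<sigma> \<in> C"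
    using assms(1) unfolding perm_class_def by blast+
  define X where "X = {x. \<exists>c\<in>C. contains x c}"
  have Xd: "distinct x" if xX: "x \<in> X" for x
  proof -
    obtain c where "c \<in> C" "contains x c" using xX unfolding X_def by blast
    then show ?thesis using contains_distinct Cp unfolding is_perm_def by blast
  qed
  have Xdown: "y \<in> X" if "x \<in> X" "contains y x" for x y
    using that contains_trans unfolding X_def by blast
  obtain g :: "nat \<Rightarrow> nat list" where g: "inj g" "range g \<subseteq> A"
    using infinite_countable_subset[OF A(2)] by blast
  have badg: "bad X g" unfolding bad_def
  proof (intro conjI allI impI)
    fix n
    have "g n \<in> C" using g A by blast
    then show "g n \<in> X" unfolding X_def using contains_refl by blast
  next
    fix i j :: nat assume "i < j"
    then have "g i \<noteq> g j" using g(1) by (metis inj_eq less_irrefl)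
    moreover have "g i \<in> A" "g j \<in> A" using g by auto
    ultimately show "\<not> contains (g i) (g j)" using A(3) unfolding antichain_def by blast
  qed
  define m where "m = mb X"
  have mbad: "bad X m" unfolding m_def by (rule mb_bad[OF badg])
  have mX: "m n \<in> X" for n using mbad unfolding bad_def by blast
  have mnc: "\<not> contains (m i) (m j)" if "i < j" for i j using mbad that unfolding bad_def by blast
  have mmin: "length (m n) \<le> length (h n)" if "bad X h" "\<forall>i<n. h i = m i" for h n
    using mb_min[OF badg that(1)] that(2) unfolding m_def by blast
  have len2: "2 \<le> length (m n)" for n
  proof (rule ccontr)
    assume "\<not> 2 \<le> length (m n)"
    then consider "length (m n) = 0" | "length (m n) = 1" by linarith
    then show False
    proof cases
      case 1 then show False using contains_nil mnc[of n "Suc n"] by blast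
    next
      case 2
      have "m (Suc n) \<noteq> []"
      proof
        assume "m (Suc n) = []"
        then show False using contains_nil[of "m (Suc n)" "m (Suc (Suc n))"] mnc[of "Suc n" "Suc (Suc n)"] by simp
      qed
      then show False using contains_one[OF 2] mnc[of n "Suc n"] by blast
    qed
  qed
  define P where "P \<beta> \<longleftrightarrow> (\<exists>n. contains \<beta> (m n) \<and> length \<beta> < length (m n))" for \<beta>
  have W: "\<exists>i j. i < j \<and> contains (x i) (x j)" if xP: "\<forall>j. P (x j)" for x :: "nat \<Rightarrow> nat list"
  proof (rule ccontr)
    assume ng: "\<not> (\<exists>i j. i < j \<and> contains (x i) (x j))"
    have "\<forall>j. \<exists>n. contains (x j) (m n) \<and> length (x j) < length (m n)" using xP unfolding P_def by blast
    then have "\<exists>N. \<forall>j. contains (x j) (m (N j)) \<and> length (x j) < length (m (N j))" by (rule choice)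
    then obtain N where N: "\<And>j. contains (x j) (m (N j))" "\<And>j. length (x j) < length (m (N j))" by blast
    obtain j0 where j0: "\<forall>j. N j0 \<le> N j"
      using ex_has_least_nat[of "\<lambda>_. True" 0 N] by blast
    define h where "h i = (if i < N j0 then m i else x (j0 + (i - N j0)))" for i
    have xX: "x j \<in> X" for j using Xdown[OF mX N(1)] .
    have "bad X h" unfolding bad_def
    proof (intro conjI allI impI)
      fix i show "h i \<in> X" unfolding h_def using mX xX by simp
    next
      fix i i' :: nat assume ii: "i < i'"
      show "\<not> contains (h i) (h i')"
      proof (cases "i' < N j0")
        case True then show ?thesis using ii mnc unfolding h_def by simp
      next
        case False
        show ?thesis
        proof (cases "i < N j0")
          case True
          let ?j = "j0 + (i' - N j0)"
          have hh: "h i = m i" "h i' = x ?j" using True False unfolding h_def by auto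
          show ?thesis
          proof
            assume "contains (h i) (h i')"
            then have "contains (m i) (m (N ?j))" using hh N(1)[of ?j] contains_trans by simp
            moreover have "i < N ?j" using True j0 by (meson less_le_trans)
            ultimately show False using mnc by blast
          qed
        next
          case False2: False
          have hh: "h i = x (j0 + (i - N j0))" "h i' = x (j0 + (i' - N j0))" using False False2 unfolding h_def by auto
          have "j0 + (i - N j0) < j0 + (i' - N j0)" using ii False2 by simp
          then show ?thesis using ng hh by auto
        qed
      qed
    qed
    have "\<forall>i<N j0. h i = m i" unfolding h_def by simp
    from mmin[OF \<open>bad X h\<close> this] have "length (m (N j0)) \<le> length (h (N j0))" .
    moreover have "h (N j0) = x j0" unfolding h_def by simp
    ultimately show False using N(2)[of j0] by simp
  qed
  have "\<forall>n. \<exists>kb. part (m n) (fst kb) (snd kb) \<and> 2 \<le> fst kb \<and> simple_perm (quot (m n) (fst kb) (snd kb))"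
    using decomp[OF Xd[OF mX] len2] by auto
  then have "\<exists>KB. \<forall>n. part (m n) (fst (KB n)) (snd (KB n)) \<and> 2 \<le> fst (KB n) \<and> simple_perm (quot (m n) (fst (KB n)) (snd (KB n)))"
    by (rule choice)
  then obtain KB where KB: "\<And>n. part (m n) (fst (KB n)) (snd (KB n))" "\<And>n. 2 \<le> fst (KB n)"
    "\<And>n. simple_perm (quot (m n) (fst (KB n)) (snd (KB n)))" by blast
  define K where "K n = fst (KB n)" for n
  define B where "B n = snd (KB n)" for n
  have KBp: "part (m n) (K n) (B n)" "2 \<le> K n" "simple_perm (quot (m n) (K n) (B n))" for n
    using KB unfolding K_def B_def by auto
  define \<sigma> where "\<sigma> n = quot (m n) (K n) (B n)" for n
  have \<sigma>S: "\<sigma> n \<in> {p \<in> C. simple_perm p}" for n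
  proof -
    obtain c where c: "c \<in> C" "contains (m n) c" using mX[of n] unfolding X_def by blast
    have "contains (\<sigma> n) c" using quot_contains[OF KBp(1)] c(2) contains_trans unfolding \<sigma>_def by blast
    moreover have "is_perm (\<sigma> n)" using KBp(3) unfolding \<sigma>_def simple_perm_def by blast
    ultimately have "\<sigma> n \<in> C" using Cd[OF c(1)] by blast
    then show ?thesis using KBp(3) unfolding \<sigma>_def by simp
  qed
  have "finite (\<sigma> ` UNIV)" using \<sigma>S by (intro finite_subset[OF _ assms(2)]) blast
  from pigeonhole_infinite[OF infinite_UNIV_nat this] obtain n0
    where Z: "infinite {n. \<sigma> n = \<sigma> n0}" by auto
  define e where "e = enumerate {n. \<sigma> n = \<sigma> n0}"
  have eZ: "\<sigma> (e i) = \<sigma> n0" for i using enumerate_in_set[OF Z] unfolding e_def by simp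
  have emono: "e i < e j" if "i < j" for i j using enumerate_mono[OF that Z] unfolding e_def .
  define k0 where "k0 = K n0"
  have Ke: "K (e i) = k0" for i
  proof -
    have "length (\<sigma> (e i)) = length (\<sigma> n0)" using eZ by simp
    then show ?thesis unfolding \<sigma>_def k0_def by simp
  qed
  define y where "y i l = blockl (m (e i)) (B (e i)) l" for i l
  have yP: "\<forall>i l. l < k0 \<longrightarrow> P (y i l)"
  proof (intro allI impI)
    fix i l assume l: "l < k0"
    then have l': "l < K (e i)" using Ke by simp
    show "P (y i l)" unfolding P_def y_def
      using block_contains[OF KBp(1) l'] block_len[OF KBp(1) KBp(2) l'] by blast
  qed
  from tuple_sub[of P k0 y, OF W yP] obtain h :: "nat \<Rightarrow> nat" where
    h: "strict_mono h" "\<forall>i j l. i < j \<longrightarrow> l < k0 \<longrightarrow> contains (y (h i) l) (y (h j) l)" by blast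
  have "contains (m (e (h 0))) (m (e (h 1)))"
  proof (rule glue)
    show "part (m (e (h 0))) k0 (B (e (h 0)))" using KBp(1) Ke by metis
    show "part (m (e (h 1))) k0 (B (e (h 1)))" using KBp(1) Ke by metis
    show "quot (m (e (h 0))) k0 (B (e (h 0))) = quot (m (e (h 1))) k0 (B (e (h 1)))"
      using eZ Ke unfolding \<sigma>_def by metis
    show "\<forall>l<k0. contains (blockl (m (e (h 0))) (B (e (h 0))) l) (blockl (m (e (h 1))) (B (e (h 1))) l)"
      using h(2) unfolding y_def by simp
  qed
  moreover have "e (h 0) < e (h 1)" using emono h(1) by (simp add: strict_mono_less)
  ultimately show False using mnc by blast
qed


end
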